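(* In the two-period model with a transparent bailout and $p_0<p_g<1-S$, in any short-lived stimulation equilibrium we have $\bar\theta_m\ge p_0$.
   Context: Two-period model: a continuum of firms with privately known type $\theta\in[0,1]$, cdf $F$, density $f>0$, $f$ strictly log-concave, and for every $b\in(0,1]$ the map $a\mapsto 2\mathbb{E}[\theta\mid a<\theta<b]-\mathbb{E}[\theta\mid\theta\le a]$ is increasing on $(0,b)$. A type-$\theta$ firm holds one unit of an asset worth $\theta$ in each of two periods $t=1,2$. In each period it has a project with cost $I>0$ and net return $S>0$ that can be funded only by selling that period's unit; selling at price $p\ge I$ yields $p+S$ for that period, not selling yields $\theta$. Firms' total payoff is the sum over periods (equilibria in the limit of period-2 weight $\delta\to1$). In each period competitive short-lived risk-neutral buyers make Bertrand price offers, breaking even in expectation (indifferent buyers buy). At $t=1$ only, the government offers to buy one unit at price $p_g$; firms sell their $t=1$ unit to the government, to the market, or not at all. $t=1$ market sales are unobserved at $t=2$; acceptance of the government offer is observed at $t=2$ (transparent bailout). Equilibrium means perfect Bayesian equilibrium. Laissez-faire: $\theta_0\in(0,1)$ uniquely solves $\theta_0-S=\mathbb{E}[\theta\mid\theta\le\theta_0]$, $p_0:=\mathbb{E}[\theta\mid\theta\le\theta_0]\ge I$. Every equilibrium has cutoffs $0<\hat\theta\le\hat\theta_g\le\theta_2$: types $\le\hat\theta$ sell in both periods, types in $(\hat\theta,\hat\theta_g]$ sell only at $t=1$ to the government, types in $(\hat\theta_g,\theta_2]$ sell only at $t=2$, higher types never sell. A short-lived stimulation equilibrium has $\hat\theta_g=\theta_2$.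 Among types $\theta\le\hat\theta$, $\mu_g$ and $1-\mu_g$ are the fractions selling at $t=1$ to the government and to the market, and $\bar\theta_g$, $\bar\theta_m$ are the average asset values of those two groups. *)

theory Defs
  imports "HOL-Analysis.Analysis"
begin

definition fd :: "(real \<Rightarrow> real) \<Rightarrow> real \<Rightarrow> real" where
  "fd f \<theta> = indicator {0..1} \<theta> * f \<theta>"

text \<open>Mass of a (possibly fractional) group of types, given by weights w(theta) in [0,1].\<close>
definition mass :: "(real \<Rightarrow> real) \<Rightarrow> (real \<Rightarrow> real) \<Rightarrow> real" where
  "mass f w = (\<integral>\<theta>. w \<theta> * fd f \<theta> \<partial>lborel)"

definition avg :: "(real \<Rightarrow> real) \<Rightarrow> (real \<Rightarrow> real) \<Rightarrow> real" where
  "avg f w = (\<integral>\<theta>. \<theta> * w \<theta> * fd f \<theta> \<partial>lborel) / mass f w"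

definition condexp :: "(real \<Rightarrow> real) \<Rightarrow> real set \<Rightarrow> real" where
  "condexp f A = avg f (indicator A)"

definition strictly_log_concave_on :: "real set \<Rightarrow> (real \<Rightarrow> real) \<Rightarrow> bool" where
  "strictly_log_concave_on A f \<longleftrightarrow>
     (\<forall>x\<in>A. \<forall>y\<in>A. \<forall>u. x \<noteq> y \<and> 0 < u \<and> u < 1 \<longrightarrow>
        ln (f (u * x + (1 - u) * y)) > u * ln (f x) + (1 - u) * ln (f y))"

text \<open>Period-1 actions: sell to the government, sell to the market, hold.\<close>
datatype act1 = Gov | Mkt | Hold

text \<open>Value of selling one unit at price p: the project (cost I, net return S) is funded iff p \<ge> I.\<close>
definition sell_val :: "real \<Rightarrow> real \<Rightarrow> real \<Rightarrow> real" where
  "sell_val I S p = (if I \<le> p then p + S else p)"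

text \<open>Total payoff (period-2 weight delta = 1) of type theta following the plan (a, s):
  period-1 action a, and sell at t=2 iff s. pg: government price, p1: t=1 market price,
  qg / qn: t=2 market prices for firms that did / did not accept the bailout (observed).\<close>
definition payoff :: "real \<Rightarrow> real \<Rightarrow> real \<Rightarrow> real \<Rightarrow> real \<Rightarrow> real \<Rightarrow> real \<Rightarrow> act1 \<Rightarrow> bool \<Rightarrow> real" where
  "payoff I S pg p1 qg qn \<theta> a s =
     (case a of Gov \<Rightarrow> sell_val I S pg | Mkt \<Rightarrow> sell_val I S p1 | Hold \<Rightarrow> \<theta>) +
     (if s then sell_val I S (if a = Gov then qg else qn) else \<theta>)"

text \<open>Mixed strategy of the firm: sigma theta a s = probability that type theta follows plan (a,s).\<close>
definition valid_strategy :: "(real \<Rightarrow> act1 \<Rightarrow> bool \<Rightarrow> real) \<Rightarrow> bool" where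
  "valid_strategy \<sigma> \<longleftrightarrow>
     (\<forall>\<theta> a s. 0 \<le> \<sigma> \<theta> a s) \<and>
     (\<forall>\<theta>. \<sigma> \<theta> Gov True + \<sigma> \<theta> Gov False + \<sigma> \<theta> Mkt True + \<sigma> \<theta> Mkt False
          + \<sigma> \<theta> Hold True + \<sigma> \<theta> Hold False = 1) \<and>
     (\<forall>a s. (\<lambda>\<theta>. \<sigma> \<theta> a s) \<in> borel_measurable borel)"

definition w_mkt1 :: "(real \<Rightarrow> act1 \<Rightarrow> bool \<Rightarrow> real) \<Rightarrow> real \<Rightarrow> real" where
  "w_mkt1 \<sigma> \<theta> = \<sigma> \<theta> Mkt True + \<sigma> \<theta> Mkt False"
definition w_lab_g :: "(real \<Rightarrow> act1 \<Rightarrow> bool \<Rightarrow> real) \<Rightarrow> real \<Rightarrow> real" where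
  "w_lab_g \<sigma> \<theta> = \<sigma> \<theta> Gov True + \<sigma> \<theta> Gov False"
definition w_lab_n :: "(real \<Rightarrow> act1 \<Rightarrow> bool \<Rightarrow> real) \<Rightarrow> real \<Rightarrow> real" where
  "w_lab_n \<sigma> \<theta> = \<sigma> \<theta> Mkt True + \<sigma> \<theta> Mkt False + \<sigma> \<theta> Hold True + \<sigma> \<theta> Hold False"
definition w_sell2_g :: "(real \<Rightarrow> act1 \<Rightarrow> bool \<Rightarrow> real) \<Rightarrow> real \<Rightarrow> real" where
  "w_sell2_g \<sigma> \<theta> = \<sigma> \<theta> Gov True"
definition w_sell2_n :: "(real \<Rightarrow> act1 \<Rightarrow> bool \<Rightarrow> real) \<Rightarrow> real \<Rightarrow> real" where
  "w_sell2_n \<sigma> \<theta> = \<sigma> \<theta> Mkt True + \<sigma> \<theta> Hold True"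

definition firm_optimal where
  "firm_optimal I S pg p1 qg qn \<sigma> \<longleftrightarrow>
     (\<forall>\<theta>\<in>{0..1}. \<forall>a s. 0 < \<sigma> \<theta> a s \<longrightarrow>
        (\<forall>a' s'. payoff I S pg p1 qg qn \<theta> a' s' \<le> payoff I S pg p1 qg qn \<theta> a s))"

definition break_even where
  "break_even f p w \<longleftrightarrow> (mass f w > 0 \<longrightarrow> p = avg f w)"

text \<open>Bertrand competition at t=2 in the market of label weight lw and price q: no buyer can
  profitably outbid, where at price p' the firm of type theta sells iff sell_val p' \<ge> theta.\<close>
definition no_overbid2 where
  "no_overbid2 f I S q lw \<longleftrightarrow>
     (\<forall>p'>q. (\<integral>\<theta>. lw \<theta> * indicator {\<theta>. \<theta> \<le> sell_val I S p'} \<theta> * (\<theta> - p') * fd f \<theta> \<partial>lborel) \<le> 0)"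

text \<open>Bertrand competition at t=1: an outbidding buyer at p' buys from the types for which
  selling to the market at p' (with optimal continuation, t=2 prices unchanged since t=1 market
  sales are unobserved) is optimal.\<close>
definition accepts1 where
  "accepts1 I S pg p' qg qn \<theta> \<longleftrightarrow>
     max (payoff I S pg p' qg qn \<theta> Mkt True) (payoff I S pg p' qg qn \<theta> Mkt False) \<ge>
     Max {payoff I S pg p' qg qn \<theta> Gov True, payoff I S pg p' qg qn \<theta> Gov False,
          payoff I S pg p' qg qn \<theta> Hold True, payoff I S pg p' qg qn \<theta> Hold False}"

definition no_overbid1 where
  "no_overbid1 f I S pg p1 qg qn \<longleftrightarrow>
     (\<forall>p'>p1. (\<integral>\<theta>. indicator {\<theta>. accepts1 I S pg p' qg qn \<theta>} \<theta> * (\<theta> - p') * fd f \<theta> \<partial>lborel) \<le> 0)"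

definition equilibrium ::
  "(real \<Rightarrow> real) \<Rightarrow> real \<Rightarrow> real \<Rightarrow> real \<Rightarrow> (real \<Rightarrow> act1 \<Rightarrow> bool \<Rightarrow> real) \<Rightarrow> real \<Rightarrow> real \<Rightarrow> real \<Rightarrow> bool" where
  "equilibrium f I S pg \<sigma> p1 qg qn \<longleftrightarrow>
     valid_strategy \<sigma> \<and>
     firm_optimal I S pg p1 qg qn \<sigma> \<and>
     break_even f p1 (w_mkt1 \<sigma>) \<and>
     break_even f qg (w_sell2_g \<sigma>) \<and>
     break_even f qn (w_sell2_n \<sigma>) \<and>
     no_overbid1 f I S pg p1 qg qn \<and>
     no_overbid2 f I S qg (w_lab_g \<sigma>) \<and>
     no_overbid2 f I S qn (w_lab_n \<sigma>)"

text \<open>Short-lived stimulation: no (positive mass of) types sells only at t=2, i.e. hat theta_g = theta_2.\<close>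
definition short_lived_stimulation where
  "short_lived_stimulation f I S pg \<sigma> p1 qg qn \<longleftrightarrow>
     equilibrium f I S pg \<sigma> p1 qg qn \<and> mass f (\<lambda>\<theta>. \<sigma> \<theta> Hold True) = 0"

definition theta_m_bar where
  "theta_m_bar f \<sigma> = avg f (w_mkt1 \<sigma>)"

end

theory Submission
  imports Defs
begin

lemma fd_int: "set_integrable lborel {0..1} f \<Longrightarrow> integrable lborel (fd f)"
  unfolding fd_def set_integrable_def by simp

lemma fd_meas: "set_integrable lborel {0..1} f \<Longrightarrow> fd f \<in> borel_measurable borel"
  proof - assume "set_integrable lborel {0..1} f" then have "fd f \<in> borel_measurable lborel" using fd_int borel_measurable_integrable by blast then show ?thesis by simp qed

lemma fd_nonneg: "\<forall>\<theta>\<in>{0..1}. f \<theta> > 0 \<Longrightarrow> fd f \<theta> \<ge> 0"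
  unfolding fd_def by (auto simp: indicator_def less_imp_le)

lemma fd_out: "\<theta> \<notin> {0..1} \<Longrightarrow> fd f \<theta> = 0"
  unfolding fd_def by simp

lemma intb:
  assumes fi: "set_integrable lborel {0..1} f" and fp: "\<forall>\<theta>\<in>{0..1}. f \<theta> > 0"
    and hm: "h \<in> borel_measurable borel" and hb: "\<forall>\<theta>\<in>{0..1}. \<bar>h \<theta>\<bar> \<le> C"
  shows "integrable lborel (\<lambda>\<theta>. h \<theta> * fd f \<theta>)"
proof (rule Bochner_Integration.integrable_bound)
  show "integrable lborel (\<lambda>\<theta>. C * fd f \<theta>)" using fd_int[OF fi] by simp
  show "(\<lambda>\<theta>. h \<theta> * fd f \<theta>) \<in> borel_measurable lborel"
    using hm fd_meas[OF fi] by simp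
  show "AE \<theta> in lborel. norm (h \<theta> * fd f \<theta>) \<le> norm (C * fd f \<theta>)"
  proof (rule AE_I2)
    fix \<theta>
    show "norm (h \<theta> * fd f \<theta>) \<le> norm (C * fd f \<theta>)"
    proof (cases "\<theta> \<in> {0..1}")
      case True
      then have "\<bar>h \<theta>\<bar> \<le> C" using hb by blast
      moreover have "fd f \<theta> \<ge> 0" using fd_nonneg fp by blast
      ultimately show ?thesis by (simp add: abs_mult mult_right_mono)
    next
      case False then show ?thesis by (simp add: fd_out)
    qed
  qed
qed

lemma ae_zero:
  assumes fi: "set_integrable lborel {0..1} f" and fp: "\<forall>\<theta>\<in>{0..1}. f \<theta> > 0"
    and wm: "w \<in> borel_measurable borel" and wb: "\<forall>\<theta>. 0 \<le> w \<theta> \<and> w \<theta> \<le> 1"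
    and m0: "mass f w = 0"
  shows "AE \<theta> in lborel. w \<theta> * fd f \<theta> = 0"
proof -
  have i: "integrable lborel (\<lambda>\<theta>. w \<theta> * fd f \<theta>)"
    by (rule intb[OF fi fp wm, of 1]) (use wb in auto)
  have "AE \<theta> in lborel. 0 \<le> w \<theta> * fd f \<theta>"
    using wb fd_nonneg[OF fp] by auto
  then show ?thesis using m0 i integral_nonneg_eq_0_iff_AE unfolding mass_def by blast
qed

lemma ae_zero_int:
  assumes "AE \<theta> in lborel. w \<theta> * fd f \<theta> = 0"
  shows "(\<integral>\<theta>. g \<theta> * (w \<theta> * fd f \<theta>) \<partial>lborel) = 0"
  by (rule integral_eq_zero_AE) (use assms in \<open>auto elim: eventually_mono\<close>)

theorem lemmaB2:
  fixes f :: "real \<Rightarrow> real" and I S pg \<theta>0 p0 p1 qg qn :: real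
    and \<sigma> :: "real \<Rightarrow> act1 \<Rightarrow> bool \<Rightarrow> real"
  assumes I_pos: "I > 0" and S_pos: "S > 0"
    and f_pos: "\<forall>\<theta>\<in>{0..1}. f \<theta> > 0"
    and f_int: "set_integrable lborel {0..1} f"
    and f_norm: "(LINT \<theta>:{0..1}|lborel. f \<theta>) = 1"
    and f_lc: "strictly_log_concave_on {0..1} f"
    and mono_cond: "\<forall>b\<in>{0<..1}. strict_mono_on {0<..<b}
          (\<lambda>a. 2 * condexp f {a<..<b} - condexp f {..a})"
    and theta0: "\<theta>0 \<in> {0<..<1}" "\<theta>0 - S = condexp f {..\<theta>0}"
    and theta0_unique: "\<forall>x\<in>{0<..<1}. x - S = condexp f {..x} \<longrightarrow> x = \<theta>0"
    and p0_def: "p0 = condexp f {..\<theta>0}"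
    and p0_I: "p0 \<ge> I"
    and pg_range: "p0 < pg" "pg < 1 - S"
    and eq: "short_lived_stimulation f I S pg \<sigma> p1 qg qn"
    and mkt_pos: "mass f (w_mkt1 \<sigma>) > 0"
  shows "theta_m_bar f \<sigma> \<ge> p0"
proof -
  have vs: "valid_strategy \<sigma>" and fo: "firm_optimal I S pg p1 qg qn \<sigma>"
    and be1: "break_even f p1 (w_mkt1 \<sigma>)" and beg: "break_even f qg (w_sell2_g \<sigma>)"
    and ben: "break_even f qn (w_sell2_n \<sigma>)"
    and nog: "no_overbid2 f I S qg (w_lab_g \<sigma>)"
    and ht0: "mass f (\<lambda>\<theta>. \<sigma> \<theta> Hold True) = 0"
    using eq unfolding short_lived_stimulation_def equilibrium_def by auto
  have nn: "\<And>\<theta> a s. 0 \<le> \<sigma> \<theta> a s" and sum1: "\<And>\<theta>. \<sigma> \<theta> Gov True + \<sigma> \<theta> Gov False + \<sigma> \<theta> Mkt True + \<sigma> \<theta> Mkt False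
          + \<sigma> \<theta> Hold True + \<sigma> \<theta> Hold False = 1"
    and sm: "\<And>a s. (\<lambda>\<theta>. \<sigma> \<theta> a s) \<in> borel_measurable borel"
    using vs unfolding valid_strategy_def by auto
  have le1: "\<And>\<theta> a s. \<sigma> \<theta> a s \<le> 1"
  proof -
    fix \<theta> a s
    show "\<sigma> \<theta> a s \<le> 1" using sum1[of \<theta>] nn[of \<theta>]
      by (cases a; cases s) (smt (verit) nn)+
  qed
  have opt: "\<And>\<theta> a s a' s'. \<theta> \<in> {0..1} \<Longrightarrow> 0 < \<sigma> \<theta> a s \<Longrightarrow>
      payoff I S pg p1 qg qn \<theta> a' s' \<le> payoff I S pg p1 qg qn \<theta> a s"
    using fo unfolding firm_optimal_def by blast
  have p1eq: "p1 = avg f (w_mkt1 \<sigma>)" using be1 mkt_pos unfolding break_even_def by blast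
  have svle: "\<And>p. sell_val I S p \<le> p + S" unfolding sell_val_def using S_pos by auto
  have svpg: "sell_val I S pg = pg + S" unfolding sell_val_def using pg_range p0_I by auto
  have th0: "\<theta>0 = p0 + S" using theta0(2) p0_def by simp
  have svp0: "sell_val I S p0 = \<theta>0" unfolding sell_val_def using p0_I th0 by auto
  show ?thesis
  proof (rule ccontr)
    assume "\<not> ?thesis"
    then have lt: "p1 < p0" unfolding theta_m_bar_def p1eq by simp
    have svp1: "sell_val I S p1 < \<theta>0" using svle[of p1] lt th0 by simp
    have mlow: "\<And>\<theta> s. \<theta> \<in> {0..1} \<Longrightarrow> 0 < \<sigma> \<theta> Mkt s \<Longrightarrow> \<theta> \<le> sell_val I S p1"
    proof -
      fix \<theta> s assume "\<theta> \<in> {0..1}" "0 < \<sigma> \<theta> Mkt s"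
      from opt[OF this, of Hold s] show "\<theta> \<le> sell_val I S p1"
        unfolding payoff_def by (cases s) auto
    qed
    have hfhigh: "\<And>\<theta>. \<theta> \<in> {0..1} \<Longrightarrow> 0 < \<sigma> \<theta> Hold False \<Longrightarrow> pg + S \<le> \<theta>"
    proof -
      fix \<theta> assume "\<theta> \<in> {0..1}" "0 < \<sigma> \<theta> Hold False"
      from opt[OF this, of Gov False] show "pg + S \<le> \<theta>"
        unfolding payoff_def using svpg by simp
    qed
    have wm_meas: "w_mkt1 \<sigma> \<in> borel_measurable borel"
      unfolding w_mkt1_def using sm by simp
    have htAE: "AE \<theta> in lborel. \<sigma> \<theta> Hold True * fd f \<theta> = 0"
      by (rule ae_zero[OF f_int f_pos sm _ ht0]) (use nn le1 in auto)
    have wmb: "\<And>\<theta>. 0 \<le> w_mkt1 \<sigma> \<theta> \<and> w_mkt1 \<sigma> \<theta> \<le> 2"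
    proof -
      fix \<theta>
      show "0 \<le> w_mkt1 \<sigma> \<theta> \<and> w_mkt1 \<sigma> \<theta> \<le> 2"
        using nn[of \<theta> Mkt True] nn[of \<theta> Mkt False] le1[of \<theta> Mkt True] le1[of \<theta> Mkt False]
        unfolding w_mkt1_def by linarith
    qed
    have iM: "integrable lborel (\<lambda>\<theta>. w_mkt1 \<sigma> \<theta> * fd f \<theta>)"
      by (rule intb[OF f_int f_pos wm_meas, of 2]) (use wmb in auto)
    have iTM: "integrable lborel (\<lambda>\<theta>. \<theta> * w_mkt1 \<sigma> \<theta> * fd f \<theta>)"
    proof (rule intb[OF f_int f_pos _, of _ 2])
      show "(\<lambda>\<theta>. \<theta> * w_mkt1 \<sigma> \<theta>) \<in> borel_measurable borel" using wm_meas by simp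
      show "\<forall>\<theta>\<in>{0..1}. \<bar>\<theta> * w_mkt1 \<sigma> \<theta>\<bar> \<le> 2"
      proof
        fix \<theta> :: real assume "\<theta> \<in> {0..1}"
        then have "\<bar>\<theta>\<bar> \<le> 1" by auto
        moreover have "\<bar>w_mkt1 \<sigma> \<theta>\<bar> \<le> 2" using wmb[of \<theta>] by auto
        ultimately show "\<bar>\<theta> * w_mkt1 \<sigma> \<theta>\<bar> \<le> 2"
          by (simp add: abs_mult) (metis abs_ge_zero mult_le_one mult.commute mult_mono' one_le_numeral order_trans mult_1)
      qed
    qed
    define MK where "MK = mass f (w_mkt1 \<sigma>)"
    define TM where "TM = (\<integral>\<theta>. \<theta> * w_mkt1 \<sigma> \<theta> * fd f \<theta> \<partial>lborel)"
    have MKpos: "MK > 0" using mkt_pos MK_def by simp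
    have TM: "TM = p1 * MK" using p1eq MKpos unfolding MK_def TM_def avg_def by simp
    have MKint: "MK = (\<integral>\<theta>. w_mkt1 \<sigma> \<theta> * fd f \<theta> \<partial>lborel)" unfolding MK_def mass_def ..
    have htI: "\<And>g. (\<integral>\<theta>. g \<theta> * (\<sigma> \<theta> Hold True * fd f \<theta>) \<partial>lborel) = 0"
      by (rule ae_zero_int[OF htAE])
    show False
    proof (cases "qg < p0")
      case True
      define ind where "ind = (\<lambda>\<theta>::real. indicator {..\<theta>0} \<theta> :: real)"
      have setq: "{\<theta>. \<theta> \<le> sell_val I S p0} = {..\<theta>0}" using svp0 by auto
      have "(\<integral>\<theta>. w_lab_g \<sigma> \<theta> * indicator {\<theta>. \<theta> \<le> sell_val I S p0} \<theta> * (\<theta> - p0) * fd f \<theta> \<partial>lborel) \<le> 0"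
        using nog True unfolding no_overbid2_def by blast
      then have I0: "(\<integral>\<theta>. w_lab_g \<sigma> \<theta> * ind \<theta> * (\<theta> - p0) * fd f \<theta> \<partial>lborel) \<le> 0"
        unfolding setq ind_def .
      have indm: "ind \<in> borel_measurable borel" unfolding ind_def by simp
      have pw: "w_lab_g \<sigma> \<theta> * ind \<theta> * (\<theta> - p0) * fd f \<theta> =
          (ind \<theta> * (\<theta> - p0)) * fd f \<theta> - \<theta> * w_mkt1 \<sigma> \<theta> * fd f \<theta> + p0 * (w_mkt1 \<sigma> \<theta> * fd f \<theta>)
          - (ind \<theta> * (\<theta> - p0)) * (\<sigma> \<theta> Hold True * fd f \<theta>)" for \<theta>
      proof (cases "\<theta> \<in> {0..1}")
        case False then show ?thesis by (simp add: fd_out)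
      next
        case in01: True
        show ?thesis
        proof (cases "\<theta> \<le> \<theta>0")
          case True
          have "\<sigma> \<theta> Hold False = 0"
          proof (rule ccontr)
            assume "\<sigma> \<theta> Hold False \<noteq> 0"
            then have "0 < \<sigma> \<theta> Hold False" using nn[of \<theta> Hold False] by simp
            from hfhigh[OF in01 this] True th0 pg_range show False by simp
          qed
          then have wl: "w_lab_g \<sigma> \<theta> = 1 - w_mkt1 \<sigma> \<theta> - \<sigma> \<theta> Hold True"
            using sum1[of \<theta>] unfolding w_lab_g_def w_mkt1_def by simp
          have i1: "ind \<theta> = 1" using True unfolding ind_def by simp
          show ?thesis unfolding wl i1 by (simp add: algebra_simps)
        next
          case False
          have z: "\<sigma> \<theta> Mkt s = 0" for s
          proof (rule ccontr)
            assume "\<sigma> \<theta> Mkt s \<noteq> 0"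
            then have "0 < \<sigma> \<theta> Mkt s" using nn[of \<theta> Mkt s] by simp
            from mlow[OF in01 this] False svp1 show False by simp
          qed
          have "ind \<theta> = 0" using False unfolding ind_def by simp
          then show ?thesis using z unfolding w_mkt1_def by simp
        qed
      qed
      have iA: "integrable lborel (\<lambda>\<theta>. (ind \<theta> * (\<theta> - p0)) * fd f \<theta>)"
      proof (rule intb[OF f_int f_pos, of _ "1 + \<bar>p0\<bar>"])
        show "(\<lambda>\<theta>. ind \<theta> * (\<theta> - p0)) \<in> borel_measurable borel" using indm by simp
        show "\<forall>\<theta>\<in>{0..1}. \<bar>ind \<theta> * (\<theta> - p0)\<bar> \<le> 1 + \<bar>p0\<bar>"
          unfolding ind_def by (auto simp: indicator_def)
      qed
      have iH: "integrable lborel (\<lambda>\<theta>. (ind \<theta> * (\<theta> - p0)) * (\<sigma> \<theta> Hold True * fd f \<theta>))"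
      proof -
        have "integrable lborel (\<lambda>\<theta>. (ind \<theta> * (\<theta> - p0) * \<sigma> \<theta> Hold True) * fd f \<theta>)"
        proof (rule intb[OF f_int f_pos, of _ "1 + \<bar>p0\<bar>"])
          show "(\<lambda>\<theta>. ind \<theta> * (\<theta> - p0) * \<sigma> \<theta> Hold True) \<in> borel_measurable borel"
            using indm sm by simp
          show "\<forall>\<theta>\<in>{0..1}. \<bar>ind \<theta> * (\<theta> - p0) * \<sigma> \<theta> Hold True\<bar> \<le> 1 + \<bar>p0\<bar>"
          proof
            fix \<theta> :: real assume "\<theta> \<in> {0..1}"
            then have a: "\<bar>ind \<theta> * (\<theta> - p0)\<bar> \<le> 1 + \<bar>p0\<bar>" unfolding ind_def by (auto simp: indicator_def)
            have b: "\<bar>\<sigma> \<theta> Hold True\<bar> \<le> 1" using nn le1 by auto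
            have "\<bar>ind \<theta> * (\<theta> - p0) * \<sigma> \<theta> Hold True\<bar> \<le> (1 + \<bar>p0\<bar>) * 1"
              unfolding abs_mult by (rule mult_mono) (use a b in auto)
            then show "\<bar>ind \<theta> * (\<theta> - p0) * \<sigma> \<theta> Hold True\<bar> \<le> 1 + \<bar>p0\<bar>" by simp
          qed
        qed
        then show ?thesis by (simp add: mult.assoc)
      qed
      define M0 where "M0 = (\<integral>\<theta>. indicator {..\<theta>0} \<theta> * fd f \<theta> \<partial>lborel)"
      define T0 where "T0 = (\<integral>\<theta>. \<theta> * indicator {..\<theta>0} \<theta> * fd f \<theta> \<partial>lborel)"
      have p0q: "p0 = T0 / M0" using p0_def unfolding condexp_def avg_def mass_def M0_def T0_def by simp
      have M0nz: "M0 \<noteq> 0" using p0q p0_I I_pos by auto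
      have iM0: "integrable lborel (\<lambda>\<theta>. indicator {..\<theta>0} \<theta> * fd f \<theta>)"
        by (rule intb[OF f_int f_pos, of _ 1]) (auto simp: indicator_def)
      have iT0: "integrable lborel (\<lambda>\<theta>. \<theta> * indicator {..\<theta>0} \<theta> * fd f \<theta>)"
        by (rule intb[OF f_int f_pos, of _ 1]) (auto simp: indicator_def)
      have A0: "(\<integral>\<theta>. (ind \<theta> * (\<theta> - p0)) * fd f \<theta> \<partial>lborel) = 0"
      proof -
        have "(\<integral>\<theta>. (ind \<theta> * (\<theta> - p0)) * fd f \<theta> \<partial>lborel)
            = (\<integral>\<theta>. \<theta> * indicator {..\<theta>0} \<theta> * fd f \<theta> - p0 * (indicator {..\<theta>0} \<theta> * fd f \<theta>) \<partial>lborel)"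
          unfolding ind_def by (rule Bochner_Integration.integral_cong) (auto simp: algebra_simps)
        also have "\<dots> = T0 - p0 * M0"
          using iM0 iT0 unfolding T0_def M0_def by simp
        also have "\<dots> = 0" using p0q M0nz by simp
        finally show ?thesis .
      qed
      have "(\<integral>\<theta>. w_lab_g \<sigma> \<theta> * ind \<theta> * (\<theta> - p0) * fd f \<theta> \<partial>lborel)
          = (\<integral>\<theta>. (ind \<theta> * (\<theta> - p0)) * fd f \<theta> - \<theta> * w_mkt1 \<sigma> \<theta> * fd f \<theta> + p0 * (w_mkt1 \<sigma> \<theta> * fd f \<theta>)
          - (ind \<theta> * (\<theta> - p0)) * (\<sigma> \<theta> Hold True * fd f \<theta>) \<partial>lborel)"
        using pw by simp
      also have "\<dots> = 0 - TM + p0 * MK - 0"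
        using iA iTM iM iH A0 htI unfolding TM_def MKint by simp
      finally have "(\<integral>\<theta>. w_lab_g \<sigma> \<theta> * ind \<theta> * (\<theta> - p0) * fd f \<theta> \<partial>lborel) = (p0 - p1) * MK"
        using TM by (simp add: algebra_simps)
      moreover have "(p0 - p1) * MK > 0" using lt MKpos by simp
      ultimately show False using I0 by simp
    next
      case False
      then have qgp: "p0 \<le> qg" by simp
      obtain \<theta>s where ts: "\<theta>s \<in> {0..1}" "w_mkt1 \<sigma> \<theta>s > 0"
      proof (rule ccontr)
        assume "\<not> thesis"
        then have "\<forall>\<theta>\<in>{0..1}. w_mkt1 \<sigma> \<theta> \<le> 0" using that by force
        then have "\<And>\<theta>. w_mkt1 \<sigma> \<theta> * fd f \<theta> = 0"
          using wmb by (metis antisym fd_out mult_eq_0_iff)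
        then have "(\<lambda>\<theta>. w_mkt1 \<sigma> \<theta> * fd f \<theta>) = (\<lambda>_. 0)" by (rule ext)
        then have "MK = 0" unfolding MKint by simp
        then show False using MKpos by simp
      qed
      obtain s where ss: "0 < \<sigma> \<theta>s Mkt s"
      proof (cases "0 < \<sigma> \<theta>s Mkt True")
        case True then show ?thesis using that by blast
      next
        case False
        then have "0 < \<sigma> \<theta>s Mkt False"
          using ts(2) nn[of \<theta>s Mkt True] unfolding w_mkt1_def by linarith
        then show ?thesis using that by blast
      qed
      have svqg: "sell_val I S qg = qg + S" unfolding sell_val_def using qgp p0_I by auto
      have tsl: "\<theta>s \<le> sell_val I S p1" using mlow[OF ts(1) ss] .
      have g1: "sell_val I S pg + sell_val I S qg \<le> sell_val I S p1 + (if s then sell_val I S qn else \<theta>s)"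
        using opt[OF ts(1) ss, of Gov True] unfolding payoff_def by (cases s) auto
      have svqn: "sell_val I S qn > \<theta>0"
      proof (cases s)
        case True
        then show ?thesis using g1 svpg svqg svle[of p1] th0 qgp lt pg_range by simp
      next
        case False
        then show ?thesis using g1 svpg svqg svle[of p1] th0 qgp lt tsl pg_range by simp
      qed
      have mf0: "\<sigma> \<theta> Mkt False = 0" if "\<theta> \<in> {0..1}" for \<theta>
      proof (rule ccontr)
        assume "\<sigma> \<theta> Mkt False \<noteq> 0"
        then have pos: "0 < \<sigma> \<theta> Mkt False" using nn[of \<theta> Mkt False] by simp
        have "sell_val I S qn \<le> \<theta>"
          using opt[OF that pos, of Mkt True] unfolding payoff_def by simp
        moreover have "\<theta> \<le> sell_val I S p1" using mlow[OF that pos] .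
        ultimately show False using svqn svp1 by simp
      qed
      have pwn: "w_sell2_n \<sigma> \<theta> * fd f \<theta> = w_mkt1 \<sigma> \<theta> * fd f \<theta> + \<sigma> \<theta> Hold True * fd f \<theta>" for \<theta>
      proof (cases "\<theta> \<in> {0..1}")
        case True then show ?thesis using mf0[OF True] unfolding w_sell2_n_def w_mkt1_def
          by (simp add: algebra_simps)
      next
        case False then show ?thesis by (simp add: fd_out)
      qed
      have iHT: "integrable lborel (\<lambda>\<theta>. \<sigma> \<theta> Hold True * fd f \<theta>)"
        by (rule intb[OF f_int f_pos sm[of Hold True], where C=1]) (use nn le1 in auto)
      have iHT2: "integrable lborel (\<lambda>\<theta>. \<theta> * (\<sigma> \<theta> Hold True * fd f \<theta>))"
      proof -
        have "integrable lborel (\<lambda>\<theta>. (\<theta> * \<sigma> \<theta> Hold True) * fd f \<theta>)"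
        proof (rule intb[OF f_int f_pos, of _ 1])
          show "(\<lambda>\<theta>. \<theta> * \<sigma> \<theta> Hold True) \<in> borel_measurable borel" using sm by simp
          show "\<forall>\<theta>\<in>{0..1}. \<bar>\<theta> * \<sigma> \<theta> Hold True\<bar> \<le> 1"
          proof
            fix \<theta> :: real assume "\<theta> \<in> {0..1}"
            then have a: "\<bar>\<theta>\<bar> \<le> 1" by auto
            have b: "\<bar>\<sigma> \<theta> Hold True\<bar> \<le> 1" using nn le1 by auto
            have "\<bar>\<theta> * \<sigma> \<theta> Hold True\<bar> \<le> 1 * 1"
              unfolding abs_mult by (rule mult_mono) (use a b in auto)
            then show "\<bar>\<theta> * \<sigma> \<theta> Hold True\<bar> \<le> 1" by simp
          qed
        qed
        then show ?thesis by (simp add: mult.assoc)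
      qed
      have h1: "(\<integral>\<theta>. \<sigma> \<theta> Hold True * fd f \<theta> \<partial>lborel) = 0"
        using htI[of "\<lambda>_. 1"] by simp
      have h2: "(\<integral>\<theta>. \<theta> * (\<sigma> \<theta> Hold True * fd f \<theta>) \<partial>lborel) = 0"
        using htI[of "\<lambda>\<theta>. \<theta>"] by simp
      have mn: "mass f (w_sell2_n \<sigma>) = MK"
      proof -
        have "mass f (w_sell2_n \<sigma>) = (\<integral>\<theta>. w_mkt1 \<sigma> \<theta> * fd f \<theta> + \<sigma> \<theta> Hold True * fd f \<theta> \<partial>lborel)"
          unfolding mass_def using pwn by simp
        also have "\<dots> = MK" using iM iHT h1 unfolding MKint by simp
        finally show ?thesis .
      qed
      have tn: "(\<integral>\<theta>. \<theta> * w_sell2_n \<sigma> \<theta> * fd f \<theta> \<partial>lborel) = TM"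
      proof -
        have "(\<integral>\<theta>. \<theta> * w_sell2_n \<sigma> \<theta> * fd f \<theta> \<partial>lborel)
            = (\<integral>\<theta>. \<theta> * w_mkt1 \<sigma> \<theta> * fd f \<theta> + \<theta> * (\<sigma> \<theta> Hold True * fd f \<theta>) \<partial>lborel)"
        proof (rule Bochner_Integration.integral_cong[OF refl])
          fix \<theta> :: real
          have "\<theta> * w_sell2_n \<sigma> \<theta> * fd f \<theta> = \<theta> * (w_sell2_n \<sigma> \<theta> * fd f \<theta>)" by simp
          also have "\<dots> = \<theta> * (w_mkt1 \<sigma> \<theta> * fd f \<theta> + \<sigma> \<theta> Hold True * fd f \<theta>)" using pwn by simp
          finally show "\<theta> * w_sell2_n \<sigma> \<theta> * fd f \<theta> = \<theta> * w_mkt1 \<sigma> \<theta> * fd f \<theta> + \<theta> * (\<sigma> \<theta> Hold True * fd f \<theta>)"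
            by (simp add: algebra_simps)
        qed
        also have "\<dots> = TM" using iTM iHT2 h2 unfolding TM_def by simp
        finally show ?thesis .
      qed
      have "qn = avg f (w_sell2_n \<sigma>)" using ben mn MKpos unfolding break_even_def by simp
      then have "qn = p1" using tn mn TM MKpos unfolding avg_def by simp
      then show False using svqn svp1 by simp
    qed
  qed
qed

end
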